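(* Let $N=\{1,\dots,n\}$, $n\ge2$, be a parallel-link network with unit demand and latency functions $\ell_i\in\mathcal{L}_c$. Suppose that $x_i(0)>0$ for all $i\in N$ (the untolled Wardrop equilibrium has full support). Let $c>0$ and $t\in\mathcal{T}(c)$. Then $x_i(t)>0$ and $t_i>0$ for all $i\in N$.
   Context: $\mathcal{L}_c$: strictly increasing, convex, continuously differentiable functions $\mathbb{R}_+\to\mathbb{R}_+$. Parallel links $N$, one unit of flow; flows $x\in\mathbb{R}^N_+$ with $\sum_ix_i=1$. For tolls $t\in\mathbb{R}^N_+$, $x(t)$ is the unique Wardrop equilibrium for $t$: for all $i,j$ with $x_i>0$, $\ell_i(x_i)+t_i\le \ell_j(x_j)+t_j$; $x(0)$ is the untolled Wardrop equilibrium. Profit of firm $i$: $\Pi_i(t)=t_ix_i(t)$. For $c\in\mathbb{R}_+$, $\mathcal{T}(c)$ is the set of $c$-capped subgame perfect Nash equilibria: toll vectors $t$ with $0\le t_i\le c$ for all $i$ such that for every $i$ and every $t'_i\in[0,c]$, $\Pi_i(t_i,t_{-i})\ge\Pi_i(t'_i,t_{-i})$ (flow recomputed as the Wardrop equilibrium). *)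

theory Defs
  imports "HOL-Analysis.Analysis"
begin

definition latency_class :: "(real \<Rightarrow> real) \<Rightarrow> bool" where
  "latency_class l \<longleftrightarrow>
     (\<forall>x\<ge>0. l x \<ge> 0) \<and> strict_mono_on {0..} l \<and> convex_on {0..} l \<and>
     (\<exists>l'. continuous_on {0..} l' \<and>
            (\<forall>x\<ge>0. (l has_real_derivative l' x) (at x within {0..})))"

definition feasible_flow :: "('n::finite \<Rightarrow> real) \<Rightarrow> bool" where
  "feasible_flow x \<longleftrightarrow> (\<forall>i. x i \<ge> 0) \<and> (\<Sum>i\<in>UNIV. x i) = 1"

definition wardrop :: "('n::finite \<Rightarrow> real \<Rightarrow> real) \<Rightarrow> ('n \<Rightarrow> real) \<Rightarrow> ('n \<Rightarrow> real) \<Rightarrow> bool" where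
  "wardrop l t x \<longleftrightarrow> feasible_flow x \<and>
     (\<forall>i j. x i > 0 \<longrightarrow> l i (x i) + t i \<le> l j (x j) + t j)"

definition eq_flow :: "('n::finite \<Rightarrow> real \<Rightarrow> real) \<Rightarrow> ('n \<Rightarrow> real) \<Rightarrow> ('n \<Rightarrow> real)" where
  "eq_flow l t = (THE x. wardrop l t x)"

definition profit :: "('n::finite \<Rightarrow> real \<Rightarrow> real) \<Rightarrow> ('n \<Rightarrow> real) \<Rightarrow> 'n \<Rightarrow> real" where
  "profit l t i = t i * eq_flow l t i"

definition capped_spne :: "('n::finite \<Rightarrow> real \<Rightarrow> real) \<Rightarrow> real \<Rightarrow> ('n \<Rightarrow> real) set" where
  "capped_spne l c = {t. (\<forall>i. 0 \<le> t i \<and> t i \<le> c) \<and>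
     (\<forall>i t'. 0 \<le> t' \<and> t' \<le> c \<longrightarrow> profit l t i \<ge> profit l (t(i := t')) i)}"

end

theory Submission
  imports Defs "HOL-Analysis.Analysis"
begin

lemma lc_cont: "latency_class f \<Longrightarrow> continuous_on {0..} f"
  unfolding latency_class_def
  by (metis DERIV_continuous_on atLeast_iff)

lemma lc_less: "latency_class f \<Longrightarrow> 0 \<le> a \<Longrightarrow> a < b \<Longrightarrow> f a < f b"
  unfolding latency_class_def strict_mono_on_def by auto

lemma lc_le: "latency_class f \<Longrightarrow> 0 \<le> a \<Longrightarrow> a \<le> b \<Longrightarrow> f a \<le> f b"
  by (metis lc_less order_le_less)

lemma int_bounds:
  assumes lc: "latency_class f" and "0 \<le> a" "a \<le> b"
  shows "(b-a) * f a \<le> integral {0..b} f - integral {0..a} f \<and>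
         integral {0..b} f - integral {0..a} f \<le> (b-a) * f b"
proof -
  have c: "continuous_on {0..b} f" using lc_cont[OF lc] by (rule continuous_on_subset) auto
  have ib: "f integrable_on {0..b}" using c by (rule integrable_continuous_interval)
  have eq: "integral {0..b} f - integral {0..a} f = integral {a..b} f"
    using Henstock_Kurzweil_Integration.integral_combine[OF assms(2,3) ib] by simp
  have iab: "f integrable_on {a..b}" using c assms
    by (intro integrable_continuous_interval continuous_on_subset[OF c]) auto
  have "integral {a..b} (\<lambda>x. f a) \<le> integral {a..b} f"
    by (rule integral_le[OF integrable_const_ivl iab]) (use lc_le[OF lc] assms in auto)
  moreover have "integral {a..b} f \<le> integral {a..b} (\<lambda>x. f b)"
    by (rule integral_le[OF iab integrable_const_ivl]) (use lc_le[OF lc] assms in auto)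
  ultimately show ?thesis using eq assms by (simp add: mult.commute)
qed

lemma sum_upd:
  fixes g :: "'n::finite \<Rightarrow> real \<Rightarrow> real"
  shows "(\<Sum>k\<in>UNIV. g k ((x(i:=a)) k)) = (\<Sum>k\<in>UNIV. g k (x k)) - g i (x i) + g i a"
proof -
  have "(\<Sum>k\<in>UNIV. g k ((x(i:=a)) k)) = g i a + (\<Sum>k\<in>UNIV-{i}. g k ((x(i:=a)) k))"
    by (simp add: sum.remove[of UNIV i])
  also have "(\<Sum>k\<in>UNIV-{i}. g k ((x(i:=a)) k)) = (\<Sum>k\<in>UNIV-{i}. g k (x k))"
    by (rule sum.cong) auto
  also have "\<dots> = (\<Sum>k\<in>UNIV. g k (x k)) - g i (x i)"
    by (simp add: sum.remove[of UNIV i])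
  finally show ?thesis by simp
qed

lemma compact_K: "compact ((PiE UNIV (\<lambda>_. {0..1::real})) \<inter> {x::'n::finite\<Rightarrow>real. sum x UNIV = 1})"
proof (rule compact_Int_closed)
  have "compactin (product_topology (\<lambda>i. euclidean) UNIV) (PiE UNIV (\<lambda>_::'n. {0..1::real}))"
    by (simp add: compactin_PiE)
  then show "compact (PiE UNIV (\<lambda>_::'n. {0..1::real}))"
    by (simp add: euclidean_product_topology compactin_euclidean_iff)
  show "closed {x::'n\<Rightarrow>real. sum x UNIV = 1}"
    by (intro closed_Collect_eq continuous_intros continuous_on_sum) auto
qed

lemma F_cont:
  assumes lc: "latency_class f"
  shows "continuous_on {0..1} (\<lambda>y. integral {0..y} f)"
proof -
  have c: "continuous_on {0..1} f" using lc_cont[OF lc] by (rule continuous_on_subset) auto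
  show ?thesis
    by (rule DERIV_continuous_on[OF integral_has_real_derivative[OF c]])
qed

lemma wardrop_unique:
  fixes l :: "'n::finite \<Rightarrow> real \<Rightarrow> real"
  assumes lc: "\<forall>i. latency_class (l i)" and x: "wardrop l t x" and y: "wardrop l t y"
  shows "x = y"
proof (rule ccontr)
  assume ne: "x \<noteq> y"
  have fx: "\<forall>i. x i \<ge> 0" "sum x UNIV = 1" and fy: "\<forall>i. y i \<ge> 0" "sum y UNIV = 1"
    using x y by (auto simp: wardrop_def feasible_flow_def)
  have "\<exists>i. x i > y i"
  proof (rule ccontr)
    assume "\<not> (\<exists>i. x i > y i)"
    then have le: "\<forall>i. x i \<le> y i" by (auto simp: not_less)
    from ne obtain k where "x k \<noteq> y k" by auto
    with le have "x k < y k" by (meson order_le_less)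
    then have "sum x UNIV < sum y UNIV" using le by (intro sum_strict_mono_ex1) auto
    then show False using fx fy by simp
  qed
  then obtain i where i: "x i > y i" by auto
  have "\<exists>j. y j > x j"
  proof (rule ccontr)
    assume "\<not> (\<exists>j. y j > x j)"
    then have le: "\<forall>j. y j \<le> x j" by (auto simp: not_less)
    then have "sum y UNIV < sum x UNIV" using i by (intro sum_strict_mono_ex1) auto
    then show False using fx fy by simp
  qed
  then obtain j where j: "y j > x j" by auto
  have "x i > 0" using i fy by (meson le_less_trans)
  then have 1: "l i (x i) + t i \<le> l j (x j) + t j" using x by (auto simp: wardrop_def)
  have "y j > 0" using j fx by (meson le_less_trans)
  then have 2: "l j (y j) + t j \<le> l i (y i) + t i" using y by (auto simp: wardrop_def)
  have 3: "l j (x j) < l j (y j)" using lc_less[of "l j"] lc fx j by auto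
  have 4: "l i (y i) < l i (x i)" using lc_less[of "l i"] lc fy i by auto
  show False using 1 2 3 4 by linarith
qed

lemma wardrop_exists:
  fixes l :: "'n::finite \<Rightarrow> real \<Rightarrow> real"
  assumes lc: "\<forall>i. latency_class (l i)"
  shows "\<exists>x. wardrop l t x"
proof -
  define g where "g i y = integral {0..y} (l i) + t i * y" for i y
  define \<Phi> where "\<Phi> x = (\<Sum>k\<in>UNIV. g k (x k))" for x :: "'n \<Rightarrow> real"
  define K where "K = (PiE UNIV (\<lambda>_. {0..1::real})) \<inter> {x::'n\<Rightarrow>real. sum x UNIV = 1}"
  have cK: "compact K" unfolding K_def by (rule compact_K)
  obtain i0 :: 'n where True by auto
  have "(\<lambda>k. if k = i0 then 1 else 0::real) \<in> K"
    unfolding K_def by auto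
  then have neK: "K \<noteq> {}" by auto
  have contg: "continuous_on {0..1} (g k)" for k
    unfolding g_def using F_cont[of "l k"] lc by (intro continuous_intros) auto
  have "continuous_on K \<Phi>"
    unfolding \<Phi>_def
  proof (intro continuous_on_sum)
    fix k
    show "continuous_on K (\<lambda>x. g k (x k))"
      by (rule continuous_on_compose2[OF contg[of k]])
        (auto simp: K_def intro: continuous_on_subset[OF continuous_on_product_coordinates])
  qed
  then obtain x where xK: "x \<in> K" and xmin: "\<forall>y\<in>K. \<Phi> x \<le> \<Phi> y"
    using continuous_attains_inf[OF cK neK] by auto
  have x01: "\<And>k. 0 \<le> x k \<and> x k \<le> 1" and xs: "sum x UNIV = 1"
    using xK by (auto simp: K_def PiE_def)
  show ?thesis
  proof (intro exI[of _ x])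
    show "wardrop l t x"
      unfolding wardrop_def feasible_flow_def
    proof (intro conjI allI impI)
      show "0 \<le> x i" for i using x01 by auto
      show "sum x UNIV = 1" by (rule xs)
      fix i j assume xi: "x i > 0"
      show "l i (x i) + t i \<le> l j (x j) + t j"
      proof (rule ccontr)
        assume "\<not> ?thesis"
        then have gt: "l i (x i) + t i > l j (x j) + t j" by simp
        then have ij: "i \<noteq> j" by auto
        define e where "e = ((l i (x i) + t i) - (l j (x j) + t j)) / 2"
        have e: "e > 0" using gt by (simp add: e_def)
        have ci: "continuous_on {0..} (l i)" and cj: "continuous_on {0..} (l j)"
          using lc lc_cont by auto
        obtain d1 where d1: "d1 > 0" "\<forall>y\<in>{0..}. dist y (x j) < d1 \<longrightarrow> dist (l j y) (l j (x j)) < e"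
          using cj e x01[of j] unfolding continuous_on_iff by (meson atLeast_iff)
        obtain d2 where d2: "d2 > 0" "\<forall>y\<in>{0..}. dist y (x i) < d2 \<longrightarrow> dist (l i y) (l i (x i)) < e"
          using ci e x01[of i] unfolding continuous_on_iff by (meson atLeast_iff)
        define d where "d = min (x i) (min d1 d2) / 2"
        have d: "d > 0" "d \<le> x i" "d < d1" "d < d2" using d1 d2 xi by (auto simp: d_def)
        have "x i + x j = sum x {i, j}" using ij by simp
        also have "\<dots> \<le> sum x UNIV" using x01 by (intro sum_mono2) auto
        finally have xij: "x i + x j \<le> 1" using xs by simp
        define y where "y = x(i := x i - d, j := x j + d)"
        have yK: "y \<in> K"
        proof -
          have "sum y UNIV = sum x UNIV"
            using sum_upd[of "\<lambda>k v. v" "x(i := x i - d)" j "x j + d"]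
                  sum_upd[of "\<lambda>k v. v" x i "x i - d"] ij
            by (simp add: y_def)
          moreover have "x i - d \<le> 1" using x01[of i] d by linarith
          ultimately show ?thesis using x01 d xij xs unfolding K_def y_def by (auto simp: PiE_def)
        qed
        have Py: "\<Phi> y = \<Phi> x - g i (x i) + g i (x i - d) - g j (x j) + g j (x j + d)"
          using sum_upd[of g "x(i := x i - d)" j "x j + d"] sum_upd[of g x i "x i - d"] ij
          by (simp add: y_def \<Phi>_def)
        have bj: "integral {0..x j + d} (l j) - integral {0..x j} (l j) \<le> d * l j (x j + d)"
          using int_bounds[of "l j" "x j" "x j + d"] lc x01[of j] d by auto
        have bi: "d * l i (x i - d) \<le> integral {0..x i} (l i) - integral {0..x i - d} (l i)"
          using int_bounds[of "l i" "x i - d" "x i"] lc x01[of i] d by auto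
        have lj: "l j (x j + d) < l j (x j) + e"
          using d1(2)[rule_format, of "x j + d"] d x01[of j] by (auto simp: dist_real_def)
        have li: "l i (x i - d) > l i (x i) - e"
          using d2(2)[rule_format, of "x i - d"] d x01[of i] by (auto simp: dist_real_def)
        have "g j (x j + d) - g j (x j) \<le> d * l j (x j + d) + d * t j"
          using bj by (simp add: g_def algebra_simps)
        moreover have "g i (x i) - g i (x i - d) \<ge> d * l i (x i - d) + d * t i"
          using bi by (simp add: g_def algebra_simps)
        moreover have "d * l j (x j + d) < d * (l j (x j) + e)"
          using lj d by (intro mult_strict_left_mono) auto
        moreover have "d * l i (x i - d) > d * (l i (x i) - e)"
          using li d by (intro mult_strict_left_mono) auto
        moreover have "d * (l j (x j) + e) + d * t j = d * (l i (x i) - e) + d * t i"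
          by (simp add: e_def algebra_simps)
        ultimately have "\<Phi> y < \<Phi> x" using Py by linarith
        with xmin yK show False by force
      qed
    qed
  qed
qed

lemma eq_flow_wardrop:
  fixes l :: "'n::finite \<Rightarrow> real \<Rightarrow> real"
  assumes lc: "\<forall>i. latency_class (l i)"
  shows "wardrop l t (eq_flow l t)"
proof -
  have "\<exists>!x. wardrop l t x" using wardrop_exists[OF lc] wardrop_unique[OF lc] by blast
  then show ?thesis unfolding eq_flow_def by (rule theI')
qed

theorem mainTheorem3:
  fixes l :: "'n::finite \<Rightarrow> real \<Rightarrow> real" and c :: real and t :: "'n \<Rightarrow> real"
  assumes "CARD('n) \<ge> 2"
    and "\<forall>i. latency_class (l i)"
    and "\<forall>i. eq_flow l (\<lambda>_. 0) i > 0"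
    and "c > 0"
    and "t \<in> capped_spne l c"
  shows "\<forall>i. eq_flow l t i > 0 \<and> t i > 0"
proof
  fix i
  note lc = assms(2)
  define x0 where "x0 = eq_flow l (\<lambda>_. 0)"
  have w0: "wardrop l (\<lambda>_. 0) x0" unfolding x0_def by (rule eq_flow_wardrop[OF lc])
  have x0p: "\<forall>k. x0 k > 0" using assms(3) by (simp add: x0_def)
  have s0: "sum x0 UNIV = 1" using w0 by (simp add: wardrop_def feasible_flow_def)
  define L where "L = l i (x0 i)"
  have Leq: "l k (x0 k) = L" for k
  proof -
    have "l k (x0 k) \<le> l i (x0 i)" "l i (x0 i) \<le> l k (x0 k)"
      using w0 x0p unfolding wardrop_def by auto
    then show ?thesis by (simp add: L_def)
  qed
  have l0: "l i 0 < L" unfolding L_def using lc_less[of "l i" 0 "x0 i"] lc x0p by auto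
  have tb: "\<forall>k. 0 \<le> t k \<and> t k \<le> c" and br: "\<forall>k t'. 0 \<le> t' \<and> t' \<le> c \<longrightarrow> profit l t k \<ge> profit l (t(k := t')) k"
    using assms(5) unfolding capped_spne_def by auto
  define ep where "ep = min c (L - l i 0)"
  have ep: "ep > 0" "ep \<le> c" "l i 0 + ep \<le> L" using assms(4) l0 by (auto simp: ep_def)
  define y where "y = eq_flow l (t(i := ep))"
  have wy: "wardrop l (t(i := ep)) y" unfolding y_def by (rule eq_flow_wardrop[OF lc])
  have y0: "\<forall>k. y k \<ge> 0" and sy: "sum y UNIV = 1" using wy by (auto simp: wardrop_def feasible_flow_def)
  have ypos: "y i > 0"
  proof (rule ccontr)
    assume "\<not> y i > 0"
    then have yi: "y i = 0" using y0[rule_format, of i] by linarith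
    have "\<exists>j. y j > x0 j"
    proof (rule ccontr)
      assume "\<not> (\<exists>j. y j > x0 j)"
      then have le: "\<forall>j. y j \<le> x0 j" by (auto simp: not_less)
      have "sum y UNIV < sum x0 UNIV" using le yi x0p by (intro sum_strict_mono_ex1) (auto intro!: exI[of _ i])
      then show False using s0 sy by simp
    qed
    then obtain j where j: "y j > x0 j" by auto
    have yj: "y j > 0" using j x0p by (meson less_trans)
    have "j \<noteq> i" using yj yi by auto
    have "l j (y j) + (t(i := ep)) j \<le> l i (y i) + (t(i := ep)) i"
      using wy yj unfolding wardrop_def by blast
    then have "l j (y j) + t j \<le> l i 0 + ep" using \<open>j \<noteq> i\<close> yi by simp
    moreover have "l j (x0 j) < l j (y j)" using lc_less[of "l j" "x0 j" "y j"] lc x0p j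
      by (simp add: less_imp_le)
    ultimately show False using Leq[of j] ep tb by (metis add_le_cancel_left add.right_neutral
        le_less_trans less_le_trans not_less order.strict_trans2)
  qed
  have "profit l (t(i := ep)) i > 0" unfolding profit_def y_def[symmetric] using ypos ep by simp
  moreover have "profit l t i \<ge> profit l (t(i := ep)) i" using br ep by auto
  ultimately have pp: "t i * eq_flow l t i > 0" unfolding profit_def by linarith
  have "eq_flow l t i \<ge> 0" using eq_flow_wardrop[OF lc, of t]
    by (simp add: wardrop_def feasible_flow_def)
  then show "eq_flow l t i > 0 \<and> t i > 0" using pp tb
    by (metis linorder_not_le mult_nonneg_nonpos mult_nonpos_nonneg order_le_less)
qed

end
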